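(* Let $\lambda>0$ and $g_l^*>0$. Let $I$ be a finite instance set with real gradients $g_i$, and let $I_f=\{i\in I: |g_i|>g_l^*\}$ and $I_f^c=I\setminus I_f$; assume $I_f\neq\emptyset$. Let $p=\frac{|I_f|}{|I|}$ and $\bar g_f=\frac{\sum_{i\in I_f}g_i}{|I_f|}$. With the leaf value $V(J)=-\frac{\sum_{i\in J}g_i}{|J|+\lambda}$ for finite sets $J$, define $\xi_I=|V(I)-V(I_f^c)|$. Then $\xi_I\le p\,(|\bar g_f|+g_l^* )$.
   Context: $I_f$ is the set of instances removed by gradient-based data filtering with threshold $g_l^*$ (instances whose gradient has absolute value exceeding $g_l^*$), and $I_f^c$ is the set of remaining instances. *)

theory Defs
  imports Complex_Main
begin

definition leaf_value :: "('a \<Rightarrow> real) \<Rightarrow> real \<Rightarrow> 'a set \<Rightarrow> real" where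
  "leaf_value g lam J = - (\<Sum>i\<in>J. g i) / (real (card J) + lam)"

end

theory Submission
  imports Defs
begin

lemma gen: "- (x + y) / a + y / b = - x / a + y * (a - b) / (b * a)" if "a \<noteq> 0" "b \<noteq> 0" for x y a b :: real
  using that by (simp add: field_simps)

theorem theorem5:
  fixes I :: "'a set" and g :: "'a \<Rightarrow> real" and lam gl :: real
  assumes "lam > 0" and "gl > 0" and "finite I"
    and "{i\<in>I. \<bar>g i\<bar> > gl} \<noteq> {}"
  shows "\<bar>leaf_value g lam I - leaf_value g lam (I - {i\<in>I. \<bar>g i\<bar> > gl})\<bar>
         \<le> (real (card {i\<in>I. \<bar>g i\<bar> > gl}) / real (card I)) *
            (\<bar>(\<Sum>i\<in>{i\<in>I. \<bar>g i\<bar> > gl}. g i) / real (card {i\<in>I. \<bar>g i\<bar> > gl})\<bar> + gl)"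
proof -
  define F where "F = {i\<in>I. \<bar>g i\<bar> > gl}"
  define C where "C = I - F"
  define Sf where "Sf = (\<Sum>i\<in>F. g i)"
  define Sc where "Sc = (\<Sum>i\<in>C. g i)"
  define k where "k = real (card F)"
  define m where "m = real (card C)"
  define n where "n = real (card I)"
  have fF: "finite F" and fC: "finite C" using assms(3) by (auto simp: F_def C_def)
  have IU: "I = F \<union> C" and dj: "F \<inter> C = {}" by (auto simp: F_def C_def)
  have cardI: "card I = card F + card C" using IU dj fF fC card_Un_disjoint by metis
  have nmk: "n = m + k" using cardI by (simp add: n_def m_def k_def)
  have kpos: "k > 0" using assms(4) fF by (simp add: k_def F_def[symmetric] card_gt_0_iff)
  have m0: "m \<ge> 0" by (simp add: m_def)
  have npos: "n > 0" using nmk kpos m0 by linarith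
  have sumI: "(\<Sum>i\<in>I. g i) = Sf + Sc" unfolding Sf_def Sc_def
    using IU dj fF fC sum.union_disjoint by metis
  have Scb: "\<bar>Sc\<bar> \<le> m * gl"
  proof -
    have "\<bar>Sc\<bar> \<le> (\<Sum>i\<in>C. \<bar>g i\<bar>)" unfolding Sc_def by (rule sum_abs)
    also have "\<dots> \<le> (\<Sum>i\<in>C. gl)" by (rule sum_mono) (auto simp: C_def F_def)
    also have "\<dots> = m * gl" by (simp add: m_def)
    finally show ?thesis .
  qed
  have lam: "lam > 0" using assms(1) .
  have diff: "leaf_value g lam I - leaf_value g lam C = - Sf / (n + lam) + Sc * k / ((m + lam) * (n + lam))"
  proof -
    have e: "leaf_value g lam I - leaf_value g lam C = - (Sf + Sc) / (n + lam) + Sc / (m + lam)"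
      unfolding leaf_value_def sumI Sc_def[symmetric] n_def m_def by simp
    have p1: "n + lam \<noteq> 0" and p2: "m + lam \<noteq> 0" using lam m0 npos by auto
    have p3: "(m + lam) * (n + lam) \<noteq> 0" using p1 p2 by simp
    have "- (Sf + Sc) / (n + lam) + Sc / (m + lam) = - Sf / (n + lam) + Sc * k / ((m + lam) * (n + lam))"
    proof -
      have kk: "k = (n + lam) - (m + lam)" using nmk by simp
      show ?thesis unfolding kk by (rule gen[OF p1 p2])
    qed
    then show ?thesis unfolding e .
  qed
  have A: "\<bar>- Sf / (n + lam)\<bar> \<le> \<bar>Sf\<bar> / n"
  proof -
    have "\<bar>- Sf / (n + lam)\<bar> = \<bar>Sf\<bar> / (n + lam)" using lam npos by (simp add: abs_divide)
    also have "\<dots> \<le> \<bar>Sf\<bar> / n" using lam npos by (intro divide_left_mono) auto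
    finally show ?thesis .
  qed
  have B: "\<bar>Sc * k / ((m + lam) * (n + lam))\<bar> \<le> k * gl / n"
  proof -
    have "\<bar>Sc * k / ((m + lam) * (n + lam))\<bar> = \<bar>Sc\<bar> * k / ((m + lam) * (n + lam))"
      using lam m0 npos kpos by (simp add: abs_mult)
    also have "\<dots> \<le> m * gl * k / ((m + lam) * (n + lam))"
      using Scb lam m0 npos kpos by (intro divide_right_mono mult_right_mono) auto
    also have "\<dots> = (m / (m + lam)) * (k * gl / (n + lam))" by simp
    also have "\<dots> \<le> 1 * (k * gl / n)"
    proof (rule mult_mono)
      show "m / (m + lam) \<le> 1" using lam m0 by simp
      show "k * gl / (n + lam) \<le> k * gl / n"
        using lam npos kpos assms(2) by (intro divide_left_mono) auto
    qed (use lam m0 npos kpos assms(2) in auto)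
    finally show ?thesis by simp
  qed
  have "\<bar>leaf_value g lam I - leaf_value g lam C\<bar> \<le> \<bar>Sf\<bar> / n + k * gl / n"
    unfolding diff using A B abs_triangle_ineq[of "- Sf / (n + lam)" "Sc * k / ((m + lam) * (n + lam))"]
    by linarith
  also have "\<dots> = (k / n) * (\<bar>Sf / k\<bar> + gl)"
  proof -
    have "\<bar>Sf / k\<bar> = \<bar>Sf\<bar> / k" using kpos by (simp add: abs_divide)
    moreover have "\<bar>Sf\<bar> / n + k * gl / n = (k / n) * (\<bar>Sf\<bar> / k + gl)"
      using kpos npos by (simp add: field_simps)
    ultimately show ?thesis by presburger
  qed
  finally have fin: "\<bar>leaf_value g lam I - leaf_value g lam C\<bar> \<le> (k / n) * (\<bar>Sf / k\<bar> + gl)" .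
  show ?thesis using fin unfolding F_def C_def Sf_def k_def n_def .
qed

end
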